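(* Let $(X,b,m)$ be a weighted graph satisfying (C), (B), (M), let $D\subseteq X$, $T>0$, $r\in[1,\infty)$, $K\ge0$, $\alpha\in[0,e^{-D_{\max}T})$, and assume the linear control problem $(H,D)$ is $(\alpha,T,r,K)$-controllable. Then $D$ is $d_{\mathrm{comb}}$-relatively dense.
   Context: Weighted graph $(X,b,m)$: $X$ countable, $m\colon X\to(0,\infty)$, $b\colon X\times X\to[0,\infty)$ symmetric, $b(x,x)=0$, $\sum_yb(x,y)<\infty$. Paths are sequences $(x_0,\dots,x_k)$ with $b(x_j,x_{j+1})>0$. (C) connected; (B) $D_{\max}:=\sup_x\operatorname{Deg}(x)<\infty$, $\operatorname{Deg}(x)=\frac1{m(x)}\sum_yb(x,y)$; (M) $\sup_xm(x)<\infty$. Combinatorial metric $d_{\mathrm{comb}}(x,y)$: minimal $n$ such that a path $(x_0,\dots,x_n)$ from $x$ to $y$ exists ($0$ if $x=y$). $D$ is $d_{\mathrm{comb}}$-relatively dense if $\inf\{R>0:\bigcup_{x\in D}\{y:d_{\mathrm{comb}}(x,y)\le R\}=X\}<\infty$. $H$ is the weighted Laplacian $Hf(x)=\frac1{m(x)}\sum_yb(x,y)(f(x)-f(y))$ on $\ell_2(X,m)$, $S_t=e^{-tH}$. The control problem $(H,D)$: $\dot f=-Hf+\mathbf 1_Du$, $f(0)=f_0$, $\mathbf 1_D$ extension by zero, mild solution $f(t)=S_tf_0+\int_0^tS_{t-\tau}\mathbf 1_Du(\tau)d\tau$; $(\alpha,T,r,K)$-controllable means for all $f_0\in\ell_2(X,m)$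 there is $u\in L_r((0,T);\ell_2(D,m|_D))$ with $\|u\|_{L_r}\le K\|f_0\|$ and $\|f(T)\|\le\alpha\|f_0\|$. *)

theory Defs
  imports "HOL-Analysis.Analysis"
begin

definition weighted_graph :: "('a::countable \<Rightarrow> 'a \<Rightarrow> real) \<Rightarrow> ('a \<Rightarrow> real) \<Rightarrow> bool" where
  "weighted_graph b m \<longleftrightarrow>
     (\<forall>x. m x > 0) \<and> (\<forall>x y. b x y \<ge> 0) \<and> (\<forall>x y. b x y = b y x) \<and>
     (\<forall>x. b x x = 0) \<and> (\<forall>x. (\<lambda>y. b x y) summable_on UNIV)"

definition graph_path :: "('a \<Rightarrow> 'a \<Rightarrow> real) \<Rightarrow> 'a \<Rightarrow> 'a \<Rightarrow> nat \<Rightarrow> bool" where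
  "graph_path b x y n \<longleftrightarrow>
     (\<exists>p::nat \<Rightarrow> 'a. p 0 = x \<and> p n = y \<and> (\<forall>i<n. b (p i) (p (Suc i)) > 0))"

definition graph_connected :: "('a \<Rightarrow> 'a \<Rightarrow> real) \<Rightarrow> bool" where
  "graph_connected b \<longleftrightarrow> (\<forall>x y. \<exists>n. graph_path b x y n)"

definition Deg :: "('a \<Rightarrow> 'a \<Rightarrow> real) \<Rightarrow> ('a \<Rightarrow> real) \<Rightarrow> 'a \<Rightarrow> real" where
  "Deg b m x = infsum (\<lambda>y. b x y) UNIV / m x"

definition D_max :: "('a \<Rightarrow> 'a \<Rightarrow> real) \<Rightarrow> ('a \<Rightarrow> real) \<Rightarrow> real" where
  "D_max b m = (SUP x. Deg b m x)"

definition bounded_degree :: "('a \<Rightarrow> 'a \<Rightarrow> real) \<Rightarrow> ('a \<Rightarrow> real) \<Rightarrow> bool" where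
  "bounded_degree b m \<longleftrightarrow> bdd_above (range (Deg b m))"

definition bounded_measure :: "('a \<Rightarrow> real) \<Rightarrow> bool" where
  "bounded_measure m \<longleftrightarrow> bdd_above (range m)"

definition d_comb :: "('a \<Rightarrow> 'a \<Rightarrow> real) \<Rightarrow> 'a \<Rightarrow> 'a \<Rightarrow> nat" where
  "d_comb b x y = (LEAST n. graph_path b x y n)"

definition comb_rel_dense :: "('a \<Rightarrow> 'a \<Rightarrow> real) \<Rightarrow> 'a set \<Rightarrow> bool" where
  "comb_rel_dense b D \<longleftrightarrow>
     (\<exists>R::real. R > 0 \<and> (\<Union>x\<in>D. {y. real (d_comb b x y) \<le> R}) = UNIV)"

text \<open>The space ell_2(A, m|_A) (functions are considered on A only) and its norm.\<close>
definition in_l2 :: "('a \<Rightarrow> real) \<Rightarrow> 'a set \<Rightarrow> ('a \<Rightarrow> real) \<Rightarrow> bool" where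
  "in_l2 m A f \<longleftrightarrow> (\<lambda>x. (f x)\<^sup>2 * m x) summable_on A"

definition l2_norm :: "('a \<Rightarrow> real) \<Rightarrow> 'a set \<Rightarrow> ('a \<Rightarrow> real) \<Rightarrow> real" where
  "l2_norm m A f = sqrt (infsum (\<lambda>x. (f x)\<^sup>2 * m x) A)"

definition laplacian :: "('a \<Rightarrow> 'a \<Rightarrow> real) \<Rightarrow> ('a \<Rightarrow> real) \<Rightarrow> ('a \<Rightarrow> real) \<Rightarrow> ('a \<Rightarrow> real)" where
  "laplacian b m f = (\<lambda>x. infsum (\<lambda>y. b x y * (f x - f y)) UNIV / m x)"

text \<open>Semigroup S_t = exp(-tH). Under (B) the operator H is bounded on ell_2(X,m), so
  exp(-tH) is given by the exponential series, which converges in ell_2 and hence pointwise.\<close>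
definition semigroup :: "('a \<Rightarrow> 'a \<Rightarrow> real) \<Rightarrow> ('a \<Rightarrow> real) \<Rightarrow> real \<Rightarrow> ('a \<Rightarrow> real) \<Rightarrow> ('a \<Rightarrow> real)" where
  "semigroup b m t f = (\<lambda>x. \<Sum>n. (-t) ^ n / fact n * ((laplacian b m ^^ n) f) x)"

definition ext_zero :: "'a set \<Rightarrow> ('a \<Rightarrow> real) \<Rightarrow> ('a \<Rightarrow> real)" where
  "ext_zero D g = (\<lambda>x. if x \<in> D then g x else 0)"

text \<open>Mild solution at time t (evaluated pointwise; the ell_2-valued Bochner integral
  evaluated at x equals the scalar integral since point evaluations are continuous).\<close>
definition mild_solution ::
  "('a \<Rightarrow> 'a \<Rightarrow> real) \<Rightarrow> ('a \<Rightarrow> real) \<Rightarrow> 'a set \<Rightarrow> ('a \<Rightarrow> real) \<Rightarrow> (real \<Rightarrow> 'a \<Rightarrow> real) \<Rightarrow> real \<Rightarrow> ('a \<Rightarrow> real)" where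
  "mild_solution b m D f0 u t = (\<lambda>x. semigroup b m t f0 x +
      (LINT \<tau>:{0<..<t}|lborel. semigroup b m (t - \<tau>) (ext_zero D (u \<tau>)) x))"

text \<open>Strong measurability of an
  ell_2(D)-valued function is (Pettis, ell_2 separable) measurability of all coordinates.
  Representatives are taken with values in ell_2(D) everywhere on (0,T) (w.l.o.g.).\<close>
definition Lr_control ::
  "('a \<Rightarrow> real) \<Rightarrow> 'a set \<Rightarrow> real \<Rightarrow> real \<Rightarrow> (real \<Rightarrow> 'a \<Rightarrow> real) \<Rightarrow> real \<Rightarrow> bool" where
  "Lr_control m D T r u C \<longleftrightarrow>
     (\<forall>x\<in>D. (\<lambda>\<tau>. u \<tau> x) \<in> borel_measurable (restrict_space lborel {0<..<T})) \<and>
     (\<forall>\<tau>\<in>{0<..<T}. in_l2 m D (u \<tau>)) \<and>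
     set_integrable lborel {0<..<T} (\<lambda>\<tau>. l2_norm m D (u \<tau>) powr r) \<and>
     (LINT \<tau>:{0<..<T}|lborel. l2_norm m D (u \<tau>) powr r) powr (1 / r) \<le> C"

definition controllable ::
  "('a \<Rightarrow> 'a \<Rightarrow> real) \<Rightarrow> ('a \<Rightarrow> real) \<Rightarrow> 'a set \<Rightarrow> real \<Rightarrow> real \<Rightarrow> real \<Rightarrow> real \<Rightarrow> bool" where
  "controllable b m D \<alpha> T r K \<longleftrightarrow>
     (\<forall>f0. in_l2 m UNIV f0 \<longrightarrow>
        (\<exists>u. Lr_control m D T r u (K * l2_norm m UNIV f0) \<and>
             l2_norm m UNIV (mild_solution b m D f0 u T) \<le> \<alpha> * l2_norm m UNIV f0))"

end

theory Submission
  imports Defs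
begin


locale wg =
  fixes b :: "'a::countable \<Rightarrow> 'a \<Rightarrow> real" and m :: "'a \<Rightarrow> real"
  assumes wg: "weighted_graph b m" and bd: "bounded_degree b m"
begin

abbreviation "H \<equiv> laplacian b m"
abbreviation "Dm \<equiv> D_max b m"
abbreviation "l2 \<equiv> in_l2 m UNIV"
definition "N f = infsum (\<lambda>x. (f x)\<^sup>2 * m x) UNIV"
definition "S x = infsum (b x) UNIV"
definition "A f x = infsum (\<lambda>y. b x y * f y) UNIV"

lemma mpos: "m x > 0" using wg unfolding weighted_graph_def by auto
lemma bnn: "b x y \<ge> 0" using wg unfolding weighted_graph_def by auto
lemma bsym: "b x y = b y x" using wg unfolding weighted_graph_def by auto
lemma bsum: "b x summable_on UNIV" using wg unfolding weighted_graph_def by auto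

lemma S_nn: "S x \<ge> 0" unfolding S_def by (rule infsum_nonneg) (simp add: bnn)
lemma Deg_eq: "Deg b m x = S x / m x" unfolding Deg_def S_def by simp
lemma Deg_le: "Deg b m x \<le> Dm"
  unfolding D_max_def using bd unfolding bounded_degree_def by (simp add: cSUP_upper)
lemma Dm_nn: "Dm \<ge> 0"
  using Deg_le[of undefined] Deg_eq[of undefined] S_nn[of undefined] mpos[of undefined]
  by (metis divide_nonneg_pos order_trans)
lemma S_le: "S x \<le> Dm * m x"
  using Deg_le[of x] Deg_eq[of x] mpos[of x] by (simp add: pos_divide_le_eq)
lemma b_le_S: "b x y \<le> S x"
proof -
  have "sum (b x) {y} \<le> infsum (b x) UNIV"
    by (rule finite_sum_le_infsum) (auto simp: bsum bnn)
  then show ?thesis by (simp add: S_def)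
qed
lemma b_le: "b x y \<le> Dm * m y"
  using b_le_S[of y x] S_le[of y] bsym[of x y] by simp

lemma sum_le_S: "finite F \<Longrightarrow> (\<Sum>x\<in>F. b x y) \<le> S y"
proof -
  assume F: "finite F"
  have "sum (b y) F \<le> infsum (b y) UNIV"
    by (rule finite_sum_le_infsum) (auto simp: bsum bnn F)
  then show ?thesis by (simp add: S_def bsym)
qed

lemma N_nn: "N f \<ge> 0" unfolding N_def
  by (rule infsum_nonneg) (simp add: mpos less_imp_le)

lemma pt_le_N: assumes "l2 f" shows "(f x)\<^sup>2 * m x \<le> N f"
proof -
  have "sum (\<lambda>x. (f x)\<^sup>2 * m x) {x} \<le> N f" unfolding N_def
    by (rule finite_sum_le_infsum) (use assms in \<open>auto simp: in_l2_def mpos less_imp_le\<close>)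
  then show ?thesis by simp
qed

lemma pt_bound: assumes "l2 f" shows "\<bar>f x\<bar> \<le> sqrt (N f / m x)"
proof -
  have "(f x)\<^sup>2 \<le> N f / m x" using pt_le_N[OF assms, of x] mpos[of x]
    by (simp add: pos_le_divide_eq)
  then show ?thesis using real_le_rsqrt by simp
qed

lemma summable_bf: assumes "l2 f" shows "(\<lambda>y. b x y * \<bar>f y\<bar>) summable_on UNIV"
proof (rule summable_on_comparison_test)
  show "(\<lambda>y. b x y / 2 + Dm / 2 * ((f y)\<^sup>2 * m y)) summable_on UNIV"
    apply (rule summable_on_add)
    using summable_on_cmult_left[OF bsum[of x], of "1/2"] apply simp
    apply (rule summable_on_cmult_right) using assms by (simp add: in_l2_def)
  fix y
  show "0 \<le> b x y * \<bar>f y\<bar>" by (simp add: bnn)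
  have "b x y * \<bar>f y\<bar> \<le> b x y * (1 + (f y)\<^sup>2) / 2"
  proof -
    have "0 \<le> (1 - \<bar>f y\<bar>)\<^sup>2" by simp
    then have "\<bar>f y\<bar> \<le> (1 + (f y)\<^sup>2)/2" by (simp add: power2_diff power2_abs)
    then have "b x y * \<bar>f y\<bar> \<le> b x y * ((1 + (f y)\<^sup>2)/2)" using bnn[of x y] by (rule mult_left_mono)
    then show ?thesis by simp
  qed
  also have "\<dots> \<le> b x y / 2 + Dm / 2 * ((f y)\<^sup>2 * m y)"
    using b_le[of x y] mult_right_mono[OF b_le[of x y], of "(f y)\<^sup>2"]
    by (simp add: algebra_simps)
  finally show "b x y * \<bar>f y\<bar> \<le> b x y / 2 + Dm / 2 * ((f y)\<^sup>2 * m y)" .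
qed

lemma summable_bf': assumes "l2 f" shows "(\<lambda>y. b x y * f y) summable_on UNIV"
proof -
  have "(\<lambda>y. norm (b x y * f y)) summable_on UNIV"
    using summable_bf[OF assms, of x] by (simp add: abs_mult bnn)
  then show ?thesis using summable_on_iff_abs_summable_on_real by blast
qed

lemma H_formula: assumes "l2 f" shows "H f x = (f x * S x - A f x) / m x"
proof -
  have "infsum (\<lambda>y. b x y * (f x - f y)) UNIV = infsum (\<lambda>y. f x * b x y + (- (b x y * f y))) UNIV"
    by (simp add: algebra_simps)
  also have "\<dots> = f x * S x - A f x"
    apply (subst infsum_add)
      apply (rule summable_on_cmult_right[OF bsum])
     apply (subst summable_on_uminus) apply (rule summable_bf'[OF assms])
    by (simp add: infsum_uminus infsum_cmult_right' S_def A_def)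
  finally show ?thesis by (simp add: laplacian_def)
qed

end


lemma cs_aux:
  fixes a s w :: real
  assumes "a \<ge> 0" "s \<ge> 0" "w \<ge> 0" "\<And>e. e > 0 \<Longrightarrow> 2 * a * e \<le> e\<^sup>2 * s + w"
  shows "a\<^sup>2 \<le> s * w"
proof (cases "a = 0")
  case True then show ?thesis using assms by simp
next
  case False
  then have a: "a > 0" using assms by simp
  show ?thesis
  proof (cases "s = 0")
    case True
    have "2 * a * ((w + 1) / (2 * a)) \<le> w" using assms(4)[of "(w + 1) / (2 * a)"] a assms True by simp
    then have "w + 1 \<le> w" using a by simp
    then show ?thesis by simp
  next
    case False
    then have s: "s > 0" using assms by simp
    have "2 * a * (a / s) \<le> (a / s)\<^sup>2 * s + w" using assms(4)[of "a / s"] a s by simp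
    then have "2 * a\<^sup>2 / s \<le> a\<^sup>2 / s + w" using s by (simp add: power2_eq_square field_simps)
    then have "a\<^sup>2 / s \<le> w" by simp
    then show ?thesis using s by (simp add: pos_divide_le_eq mult.commute)
  qed
qed

lemma bounded_finite_sums:
  fixes g :: "'b \<Rightarrow> real"
  assumes "\<And>x. g x \<ge> 0" "\<And>F. finite F \<Longrightarrow> sum g F \<le> C"
  shows "g summable_on UNIV \<and> infsum g UNIV \<le> C"
proof
  show s: "g summable_on UNIV"
    by (rule nonneg_bdd_above_summable_on) (use assms in \<open>auto intro!: bdd_aboveI2\<close>)
  show "infsum g UNIV \<le> C" by (rule infsum_le_finite_sums[OF s]) (use assms in auto)
qed

lemma infsum_finite_sum:
  fixes g :: "'c \<Rightarrow> 'b \<Rightarrow> real"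
  assumes "finite F" "\<And>x. x \<in> F \<Longrightarrow> g x summable_on UNIV"
  shows "(\<Sum>x\<in>F. infsum (g x) UNIV) = infsum (\<lambda>y. \<Sum>x\<in>F. g x y) UNIV
     \<and> (\<lambda>y. \<Sum>x\<in>F. g x y) summable_on UNIV"
  using assms
proof (induction F rule: finite_induct)
  case empty then show ?case by simp
next
  case (insert a F)
  then have IH: "(\<Sum>x\<in>F. infsum (g x) UNIV) = infsum (\<lambda>y. \<Sum>x\<in>F. g x y) UNIV"
    "(\<lambda>y. \<Sum>x\<in>F. g x y) summable_on UNIV" by auto
  have ga: "g a summable_on UNIV" using insert by auto
  show ?case using insert(1,2) IH ga
    by (simp add: infsum_add summable_on_add)
qed

context wg begin

definition "W f x = infsum (\<lambda>y. b x y * (f y)\<^sup>2) UNIV"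

lemma summable_bf2: assumes "l2 f" shows "(\<lambda>y. b x y * (f y)\<^sup>2) summable_on UNIV"
proof (rule summable_on_comparison_test)
  show "(\<lambda>y. Dm * ((f y)\<^sup>2 * m y)) summable_on UNIV"
    apply (rule summable_on_cmult_right) using assms by (simp add: in_l2_def)
  fix y
  show "0 \<le> b x y * (f y)\<^sup>2" by (simp add: bnn)
  show "b x y * (f y)\<^sup>2 \<le> Dm * ((f y)\<^sup>2 * m y)"
    using mult_right_mono[OF b_le[of x y], of "(f y)\<^sup>2"] by (simp add: algebra_simps)
qed

lemma W_nn: "W f x \<ge> 0" unfolding W_def by (rule infsum_nonneg) (simp add: bnn)

lemma CS: assumes "l2 f" shows "(A (\<lambda>y. \<bar>f y\<bar>) x)\<^sup>2 \<le> S x * W f x"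
proof (rule cs_aux)
  show "0 \<le> A (\<lambda>y. \<bar>f y\<bar>) x" unfolding A_def by (rule infsum_nonneg) (simp add: bnn)
  show "0 \<le> S x" by (rule S_nn)
  show "0 \<le> W f x" by (rule W_nn)
  fix e :: real assume e: "e > 0"
  have "2 * e * A (\<lambda>y. \<bar>f y\<bar>) x = infsum (\<lambda>y. 2 * e * (b x y * \<bar>f y\<bar>)) UNIV"
    unfolding A_def by (simp add: infsum_cmult_right')
  also have "\<dots> \<le> infsum (\<lambda>y. e\<^sup>2 * b x y + b x y * (f y)\<^sup>2) UNIV"
  proof (rule infsum_mono)
    show "(\<lambda>y. 2 * e * (b x y * \<bar>f y\<bar>)) summable_on UNIV"
      by (rule summable_on_cmult_right[OF summable_bf[OF assms]])
    show "(\<lambda>y. e\<^sup>2 * b x y + b x y * (f y)\<^sup>2) summable_on UNIV"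
      by (rule summable_on_add[OF summable_on_cmult_right[OF bsum] summable_bf2[OF assms]])
    fix y
    have "0 \<le> (e - \<bar>f y\<bar>)\<^sup>2" by simp
    then have "2 * e * \<bar>f y\<bar> \<le> e\<^sup>2 + (f y)\<^sup>2" by (simp add: power2_diff power2_abs)
    then have "b x y * (2 * e * \<bar>f y\<bar>) \<le> b x y * (e\<^sup>2 + (f y)\<^sup>2)" using bnn[of x y] by (rule mult_left_mono)
    then show "2 * e * (b x y * \<bar>f y\<bar>) \<le> e\<^sup>2 * b x y + b x y * (f y)\<^sup>2"
      by (simp add: algebra_simps)
  qed
  also have "\<dots> = e\<^sup>2 * S x + W f x"
    unfolding S_def W_def
    by (simp add: infsum_add summable_on_cmult_right[OF bsum] summable_bf2[OF assms] infsum_cmult_right')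
  finally show "2 * A (\<lambda>y. \<bar>f y\<bar>) x * e \<le> e\<^sup>2 * S x + W f x" by (simp add: algebra_simps)
qed

lemma absA: assumes "l2 f" shows "\<bar>A f x\<bar> \<le> A (\<lambda>y. \<bar>f y\<bar>) x"
proof -
  have "norm (A f x) \<le> infsum (\<lambda>y. norm (b x y * f y)) UNIV" unfolding A_def
    by (rule norm_infsum_bound) (use summable_bf[OF assms, of x] in \<open>simp add: abs_mult bnn\<close>)
  then show ?thesis unfolding A_def by (simp add: abs_mult bnn)
qed

lemma sumW: assumes "l2 f" "finite F" shows "(\<Sum>x\<in>F. W f x) \<le> Dm * N f"
proof -
  have "(\<Sum>x\<in>F. W f x) = infsum (\<lambda>y. \<Sum>x\<in>F. b x y * (f y)\<^sup>2) UNIV"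
    unfolding W_def using infsum_finite_sum[OF assms(2), of "\<lambda>x y. b x y * (f y)\<^sup>2"] summable_bf2[OF assms(1)]
    by simp
  also have "\<dots> \<le> infsum (\<lambda>y. Dm * ((f y)\<^sup>2 * m y)) UNIV"
  proof (rule infsum_mono)
    show "(\<lambda>y. \<Sum>x\<in>F. b x y * (f y)\<^sup>2) summable_on UNIV"
      using infsum_finite_sum[OF assms(2), of "\<lambda>x y. b x y * (f y)\<^sup>2"] summable_bf2[OF assms(1)] by simp
    show "(\<lambda>y. Dm * ((f y)\<^sup>2 * m y)) summable_on UNIV"
      apply (rule summable_on_cmult_right) using assms by (simp add: in_l2_def)
    fix y
    have "(\<Sum>x\<in>F. b x y * (f y)\<^sup>2) = (\<Sum>x\<in>F. b x y) * (f y)\<^sup>2" by (simp add: sum_distrib_right)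
    also have "\<dots> \<le> (Dm * m y) * (f y)\<^sup>2"
      using sum_le_S[OF assms(2), of y] S_le[of y] by (intro mult_right_mono) auto
    finally show "(\<Sum>x\<in>F. b x y * (f y)\<^sup>2) \<le> Dm * ((f y)\<^sup>2 * m y)" by (simp add: algebra_simps)
  qed
  also have "\<dots> = Dm * N f" unfolding N_def by (simp add: infsum_cmult_right')
  finally show ?thesis .
qed

lemma H_pt: assumes "l2 f"
  shows "(H f x)\<^sup>2 * m x \<le> 2 * Dm\<^sup>2 * ((f x)\<^sup>2 * m x) + 2 * Dm * W f x"
proof -
  have mx: "m x > 0" by (rule mpos)
  have "(H f x)\<^sup>2 * m x = (f x * S x - A f x)\<^sup>2 / m x"
    using mx by (simp add: H_formula[OF assms] power2_eq_square field_simps)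
  also have "\<dots> \<le> (2 * ((f x)\<^sup>2 * (S x)\<^sup>2) + 2 * (A f x)\<^sup>2) / m x"
  proof (rule divide_right_mono)
    have "0 \<le> (f x * S x + A f x)\<^sup>2" by simp
    then show "(f x * S x - A f x)\<^sup>2 \<le> 2 * ((f x)\<^sup>2 * (S x)\<^sup>2) + 2 * (A f x)\<^sup>2"
      by (simp add: power2_diff power2_sum power_mult_distrib)
  qed (use mx in simp)
  also have "\<dots> = 2 * ((f x)\<^sup>2 * m x) * (S x / m x)\<^sup>2 + 2 * ((A f x)\<^sup>2 / m x)"
    using mx by (simp add: power2_eq_square field_simps)
  also have "\<dots> \<le> 2 * ((f x)\<^sup>2 * m x) * Dm\<^sup>2 + 2 * (Dm * W f x)"
  proof (rule add_mono)
    have "S x / m x \<le> Dm" using Deg_le[of x] Deg_eq[of x] by simp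
    moreover have "0 \<le> S x / m x" using S_nn mx by simp
    ultimately have "(S x / m x)\<^sup>2 \<le> Dm\<^sup>2" by (simp add: power_mono)
    then show "2 * ((f x)\<^sup>2 * m x) * (S x / m x)\<^sup>2 \<le> 2 * ((f x)\<^sup>2 * m x) * Dm\<^sup>2"
      using mx by (intro mult_left_mono) auto
    have "(A f x)\<^sup>2 \<le> (A (\<lambda>y. \<bar>f y\<bar>) x)\<^sup>2"
      using absA[OF assms, of x] by (metis abs_ge_zero power2_abs power_mono)
    also have "\<dots> \<le> S x * W f x" by (rule CS[OF assms])
    finally have "(A f x)\<^sup>2 / m x \<le> S x / m x * W f x" using mx by (simp add: divide_right_mono)
    also have "\<dots> \<le> Dm * W f x"
      using mult_right_mono[of "S x / m x" Dm "W f x"] Deg_le[of x] Deg_eq[of x] W_nn[of f x] by simp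
    finally show "2 * ((A f x)\<^sup>2 / m x) \<le> 2 * (Dm * W f x)" by simp
  qed
  finally show ?thesis by (simp add: algebra_simps)
qed

lemma H_l2: assumes "l2 f" shows "l2 (H f) \<and> N (H f) \<le> 4 * Dm\<^sup>2 * N f"
proof -
  have *: "(\<lambda>x. (H f x)\<^sup>2 * m x) summable_on UNIV \<and> infsum (\<lambda>x. (H f x)\<^sup>2 * m x) UNIV \<le> 4 * Dm\<^sup>2 * N f"
  proof (rule bounded_finite_sums)
    fix x show "0 \<le> (H f x)\<^sup>2 * m x" using mpos[of x] by simp
  next
    fix F :: "'a set" assume F: "finite F"
    have "(\<Sum>x\<in>F. (H f x)\<^sup>2 * m x) \<le> (\<Sum>x\<in>F. 2 * Dm\<^sup>2 * ((f x)\<^sup>2 * m x) + 2 * Dm * W f x)"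
      by (rule sum_mono) (rule H_pt[OF assms])
    also have "\<dots> = 2 * Dm\<^sup>2 * (\<Sum>x\<in>F. (f x)\<^sup>2 * m x) + 2 * Dm * (\<Sum>x\<in>F. W f x)"
      by (simp add: sum.distrib sum_distrib_left)
    also have "\<dots> \<le> 2 * Dm\<^sup>2 * N f + 2 * Dm * (Dm * N f)"
    proof (rule add_mono)
      have "(\<Sum>x\<in>F. (f x)\<^sup>2 * m x) \<le> N f" unfolding N_def
        by (rule finite_sum_le_infsum) (use assms F in \<open>auto simp: in_l2_def mpos less_imp_le\<close>)
      then show "2 * Dm\<^sup>2 * (\<Sum>x\<in>F. (f x)\<^sup>2 * m x) \<le> 2 * Dm\<^sup>2 * N f" by (simp add: mult_left_mono)
      show "2 * Dm * (\<Sum>x\<in>F. W f x) \<le> 2 * Dm * (Dm * N f)"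
        using sumW[OF assms F] Dm_nn by (simp add: mult_left_mono)
    qed
    also have "\<dots> = 4 * Dm\<^sup>2 * N f" by (simp add: power2_eq_square)
    finally show "(\<Sum>x\<in>F. (H f x)\<^sup>2 * m x) \<le> 4 * Dm\<^sup>2 * N f" .
  qed
  then show ?thesis by (simp add: in_l2_def N_def)
qed

end


lemma comb_step:
  fixes d :: real and v :: "nat \<Rightarrow> real"
  shows "(\<Sum>k\<le>n. real (n choose k) * d^(n-k) * (-1)^k * (d * v k - v (Suc k)))
       = (\<Sum>k\<le>Suc n. real (Suc n choose k) * d^(Suc n-k) * (-1)^k * v k)"
proof -
  have e1: "(\<Sum>k\<le>Suc n. real (n choose k) * d^(Suc n-k) * (-1)^k * v k)
          = (\<Sum>k\<le>n. real (n choose k) * d^(Suc n-k) * (-1)^k * v k)"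
    by (simp add: sum.atMost_Suc)
  have e2: "(\<Sum>k\<le>Suc n. real (n choose k) * d^(Suc n-k) * (-1)^k * v k)
          = d^(Suc n) * v 0 + (\<Sum>j\<le>n. real (n choose Suc j) * d^(n-j) * (-1)^(Suc j) * v (Suc j))"
    by (subst sum.atMost_Suc_shift) simp
  have e3: "(\<Sum>k\<le>Suc n. real (Suc n choose k) * d^(Suc n-k) * (-1)^k * v k)
          = d^(Suc n) * v 0 + (\<Sum>j\<le>n. (real (n choose j) + real (n choose Suc j)) * d^(n-j) * (-1)^(Suc j) * v (Suc j))"
    by (subst sum.atMost_Suc_shift) simp
  have e4: "(\<Sum>j\<le>n. (real (n choose j) + real (n choose Suc j)) * d^(n-j) * (-1)^(Suc j) * v (Suc j))
     = (\<Sum>j\<le>n. real (n choose Suc j) * d^(n-j) * (-1)^(Suc j) * v (Suc j))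
       - (\<Sum>j\<le>n. real (n choose j) * d^(n-j) * (-1)^j * v (Suc j))"
    unfolding sum_subtractf[symmetric] by (rule sum.cong[OF refl]) (simp add: ring_distribs)
  have e5: "(\<Sum>k\<le>n. real (n choose k) * d^(n-k) * (-1)^k * (d * v k - v (Suc k)))
     = (\<Sum>k\<le>n. real (n choose k) * d^(Suc n-k) * (-1)^k * v k)
       - (\<Sum>j\<le>n. real (n choose j) * d^(n-j) * (-1)^j * v (Suc j))"
  proof -
    have "\<And>k. k \<le> n \<Longrightarrow> real (n choose k) * d^(n-k) * (-1)^k * (d * v k - v (Suc k))
        = real (n choose k) * d^(Suc n-k) * (-1)^k * v k - real (n choose k) * d^(n-k) * (-1)^k * v (Suc k)"
      by (simp add: Suc_diff_le algebra_simps)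
    then show ?thesis by (simp add: sum_subtractf[symmetric])
  qed
  have e6: "(\<Sum>k\<le>n. real (n choose k) * d^(Suc n-k) * (-1)^k * v k)
     = d^(Suc n) * v 0 + (\<Sum>j\<le>n. real (n choose Suc j) * d^(n-j) * (-1)^(Suc j) * v (Suc j))"
    by (rule trans[OF e1[symmetric] e2])
  show ?thesis unfolding e5 e6 e3 e4 by simp
qed

context wg begin

definition "P f = (\<lambda>x. Dm * f x - H f x)"

lemma l2_add: assumes "l2 f" "l2 g"
  shows "l2 (\<lambda>x. f x + g x) \<and> N (\<lambda>x. f x + g x) \<le> 2 * N f + 2 * N g"
proof -
  have s: "(\<lambda>x. 2 * ((f x)\<^sup>2 * m x) + 2 * ((g x)\<^sup>2 * m x)) summable_on UNIV"
    using assms unfolding in_l2_def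
    by (intro summable_on_add summable_on_cmult_right)
  have pt: "(f x + g x)\<^sup>2 * m x \<le> 2 * ((f x)\<^sup>2 * m x) + 2 * ((g x)\<^sup>2 * m x)" for x
  proof -
    have "0 \<le> (f x - g x)\<^sup>2" by simp
    then have "(f x + g x)\<^sup>2 \<le> 2 * (f x)\<^sup>2 + 2 * (g x)\<^sup>2" by (simp add: power2_diff power2_sum)
    then have "(f x + g x)\<^sup>2 * m x \<le> (2 * (f x)\<^sup>2 + 2 * (g x)\<^sup>2) * m x"
      using mpos[of x] by (intro mult_right_mono) auto
    then show ?thesis by (simp add: algebra_simps)
  qed
  have s2: "(\<lambda>x. (f x + g x)\<^sup>2 * m x) summable_on UNIV"
    by (rule summable_on_comparison_test[OF s pt]) (simp add: mpos less_imp_le)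
  have "N (\<lambda>x. f x + g x) \<le> infsum (\<lambda>x. 2 * ((f x)\<^sup>2 * m x) + 2 * ((g x)\<^sup>2 * m x)) UNIV"
    unfolding N_def by (rule infsum_mono[OF s2 s pt])
  also have "\<dots> = 2 * N f + 2 * N g" unfolding N_def
    using assms unfolding in_l2_def
    by (simp add: infsum_add summable_on_cmult_right infsum_cmult_right')
  finally show ?thesis using s2 by (simp add: in_l2_def)
qed

lemma l2_scale: assumes "l2 f"
  shows "l2 (\<lambda>x. c * f x) \<and> N (\<lambda>x. c * f x) = c\<^sup>2 * N f"
proof -
  have e: "(\<lambda>x. (c * f x)\<^sup>2 * m x) = (\<lambda>x. c\<^sup>2 * ((f x)\<^sup>2 * m x))"
    by (simp add: power_mult_distrib mult.assoc)
  show ?thesis using assms unfolding in_l2_def N_def e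
    by (simp add: summable_on_cmult_right infsum_cmult_right')
qed

lemma l2_zero: "l2 (\<lambda>x. 0)" by (simp add: in_l2_def)

lemma l2_sum: assumes "finite K" "\<And>k. k \<in> K \<Longrightarrow> l2 (g k)"
  shows "l2 (\<lambda>x. \<Sum>k\<in>K. g k x)"
  using assms
proof (induction K rule: finite_induct)
  case empty then show ?case by (simp add: l2_zero)
next
  case (insert a K)
  then show ?case using l2_add[of "g a" "\<lambda>x. \<Sum>k\<in>K. g k x"] by simp
qed

lemma A_add: assumes "l2 f" "l2 g" shows "A (\<lambda>y. f y + g y) x = A f x + A g x"
  unfolding A_def by (simp add: distrib_left infsum_add summable_bf'[OF assms(1)] summable_bf'[OF assms(2)])

lemma H_add: assumes "l2 f" "l2 g" shows "H (\<lambda>y. f y + g y) x = H f x + H g x"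
proof -
  have l: "l2 (\<lambda>y. f y + g y)" using l2_add[OF assms] by simp
  have "H (\<lambda>y. f y + g y) x = ((f x + g x) * S x - (A f x + A g x)) / m x"
    using H_formula[OF l, of x] A_add[OF assms, of x] by simp
  also have "\<dots> = (f x * S x - A f x) / m x + (g x * S x - A g x) / m x"
    by (subst add_divide_distrib[symmetric]) (simp add: algebra_simps)
  finally show ?thesis using H_formula[OF assms(1), of x] H_formula[OF assms(2), of x] by simp
qed

lemma H_scale: "H (\<lambda>y. c * f y) x = c * H f x"
proof -
  have "(\<lambda>y. b x y * (c * f x - c * f y)) = (\<lambda>y. c * (b x y * (f x - f y)))"
    by (simp add: algebra_simps)
  then show ?thesis unfolding laplacian_def by (simp add: infsum_cmult_right')
qed

lemma H_zero: "H (\<lambda>y. 0) x = 0" unfolding laplacian_def by simp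

lemma H_sum: assumes "finite K" "\<And>k. k \<in> K \<Longrightarrow> l2 (g k)"
  shows "H (\<lambda>y. \<Sum>k\<in>K. g k y) x = (\<Sum>k\<in>K. H (g k) x)"
  using assms
proof (induction K rule: finite_induct)
  case empty then show ?case by (simp add: H_zero)
next
  case (insert a K)
  have "H (\<lambda>y. \<Sum>k\<in>insert a K. g k y) x = H (\<lambda>y. g a y + (\<Sum>k\<in>K. g k y)) x"
    using insert(1,2) by simp
  also have "\<dots> = H (g a) x + H (\<lambda>y. \<Sum>k\<in>K. g k y) x"
    using insert by (intro H_add) (auto intro!: l2_sum)
  finally show ?case using insert by simp
qed

lemma H_l2': assumes "l2 f" shows "l2 (H f) \<and> N (H f) \<le> 16 * Dm\<^sup>2 * N f"
proof -
  have "4 * Dm\<^sup>2 * N f \<le> 16 * Dm\<^sup>2 * N f" using N_nn[of f] zero_le_power2[of Dm]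
    by (intro mult_right_mono) auto
  then show ?thesis using H_l2[OF assms] by linarith
qed

lemma P_l2: assumes "l2 f" shows "l2 (P f) \<and> N (P f) \<le> 16 * Dm\<^sup>2 * N f"
proof -
  have h: "l2 (H f)" "N (H f) \<le> 4 * Dm\<^sup>2 * N f" using H_l2[OF assms] by auto
  have a: "l2 (\<lambda>x. Dm * f x)" "N (\<lambda>x. Dm * f x) = Dm\<^sup>2 * N f" using l2_scale[OF assms] by auto
  have c: "l2 (\<lambda>x. (-1) * H f x)" "N (\<lambda>x. (-1) * H f x) = N (H f)" using l2_scale[OF h(1), of "-1"] by auto
  have e: "P f = (\<lambda>x. Dm * f x + (-1) * H f x)" unfolding P_def by auto
  have "l2 (P f) \<and> N (P f) \<le> 2 * N (\<lambda>x. Dm * f x) + 2 * N (\<lambda>x. (-1) * H f x)"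
    unfolding e by (rule l2_add[OF a(1) c(1)])
  moreover have "2 * N (\<lambda>x. Dm * f x) + 2 * N (\<lambda>x. (-1) * H f x) \<le> 16 * Dm\<^sup>2 * N f"
  proof -
    have "0 \<le> Dm\<^sup>2 * N f" using N_nn[of f] by simp
    then show ?thesis using a(2) c(2) h(2) by linarith
  qed
  ultimately show ?thesis by linarith
qed

lemma iter_l2:
  assumes op: "\<And>f. l2 f \<Longrightarrow> l2 (op f) \<and> N (op f) \<le> 16 * Dm\<^sup>2 * N f" and f: "l2 f"
  shows "l2 ((op ^^ n) f) \<and> N ((op ^^ n) f) \<le> (16 * Dm\<^sup>2) ^ n * N f"
proof (induction n)
  case 0 then show ?case using f by simp
next
  case (Suc n)
  then have "l2 (op ((op ^^ n) f))" "N (op ((op ^^ n) f)) \<le> 16 * Dm\<^sup>2 * N ((op ^^ n) f)"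
    using op by auto
  moreover have "16 * Dm\<^sup>2 * N ((op ^^ n) f) \<le> 16 * Dm\<^sup>2 * ((16 * Dm\<^sup>2) ^ n * N f)"
    using Suc by (intro mult_left_mono) auto
  ultimately show ?case by simp
qed

lemma iter_pt:
  assumes op: "\<And>f. l2 f \<Longrightarrow> l2 (op f) \<and> N (op f) \<le> 16 * Dm\<^sup>2 * N f" and f: "l2 f"
  shows "\<bar>(op ^^ n) f x\<bar> \<le> (4 * Dm) ^ n * sqrt (N f / m x)"
proof -
  have i: "l2 ((op ^^ n) f)" "N ((op ^^ n) f) \<le> (16 * Dm\<^sup>2) ^ n * N f" using iter_l2[OF op f] by auto
  have "\<bar>(op ^^ n) f x\<bar> \<le> sqrt (N ((op ^^ n) f) / m x)" by (rule pt_bound[OF i(1)])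
  also have "\<dots> \<le> sqrt ((16 * Dm\<^sup>2) ^ n * N f / m x)"
    using i(2) mpos[of x] by (simp add: divide_right_mono)
  also have "\<dots> = sqrt ((16 * Dm\<^sup>2) ^ n) * sqrt (N f / m x)"
    by (simp add: real_sqrt_mult[symmetric])
  also have "sqrt ((16 * Dm\<^sup>2) ^ n) = (4 * Dm) ^ n"
  proof -
    have "(16 * Dm\<^sup>2) ^ n = ((4 * Dm)\<^sup>2) ^ n" by (simp add: power_mult_distrib)
    also have "\<dots> = ((4 * Dm) ^ n)\<^sup>2" by (metis power_mult mult.commute)
    finally show ?thesis using Dm_nn by simp
  qed
  finally show ?thesis .
qed

lemma P_nonneg: assumes "l2 f" "\<And>x. f x \<ge> 0" shows "P f x \<ge> 0"
proof -
  have mx: "m x > 0" by (rule mpos)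
  have "P f x = (Dm - S x / m x) * f x + A f x / m x"
    unfolding P_def using mx by (simp add: H_formula[OF assms(1)] field_simps)
  moreover have "A f x \<ge> 0" unfolding A_def by (rule infsum_nonneg) (simp add: bnn assms)
  moreover have "Dm - S x / m x \<ge> 0" using Deg_le[of x] Deg_eq[of x] by simp
  ultimately show ?thesis using assms(2)[of x] mx by simp
qed

lemma Piter_nonneg: assumes "l2 f" "\<And>x. f x \<ge> 0" shows "(P ^^ k) f x \<ge> 0"
proof (induction k arbitrary: x)
  case 0 then show ?case using assms by simp
next
  case (Suc k)
  have "l2 ((P ^^ k) f)" using iter_l2[OF P_l2 assms(1)] by auto
  then show ?case using P_nonneg Suc by simp
qed

lemma binom: assumes "l2 f"
  shows "(H ^^ n) f x = (\<Sum>k\<le>n. real (n choose k) * Dm^(n-k) * (-1)^k * (P ^^ k) f x)"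
proof (induction n arbitrary: x)
  case 0 then show ?case by simp
next
  case (Suc n)
  have lk: "l2 ((P ^^ k) f)" for k using iter_l2[OF P_l2 assms] by auto
  have "(H ^^ Suc n) f x = H ((H ^^ n) f) x" by simp
  also have "(H ^^ n) f = (\<lambda>x. \<Sum>k\<le>n. real (n choose k) * Dm^(n-k) * (-1)^k * (P ^^ k) f x)"
    using Suc by auto
  also have "H (\<lambda>x. \<Sum>k\<le>n. real (n choose k) * Dm^(n-k) * (-1)^k * (P ^^ k) f x) x
      = (\<Sum>k\<le>n. H (\<lambda>x. real (n choose k) * Dm^(n-k) * (-1)^k * (P ^^ k) f x) x)"
    by (rule H_sum) (use l2_scale lk in auto)
  also have "\<dots> = (\<Sum>k\<le>n. real (n choose k) * Dm^(n-k) * (-1)^k * (Dm * (P ^^ k) f x - (P ^^ Suc k) f x))"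
  proof (rule sum.cong[OF refl])
    fix k
    have "H (\<lambda>x. real (n choose k) * Dm^(n-k) * (-1)^k * (P ^^ k) f x) x
        = real (n choose k) * Dm^(n-k) * (-1)^k * H ((P ^^ k) f) x"
      by (rule H_scale)
    moreover have "H ((P ^^ k) f) x = Dm * (P ^^ k) f x - (P ^^ Suc k) f x"
      by (simp add: P_def)
    ultimately show "H (\<lambda>x. real (n choose k) * Dm^(n-k) * (-1)^k * (P ^^ k) f x) x
        = real (n choose k) * Dm^(n-k) * (-1)^k * (Dm * (P ^^ k) f x - (P ^^ Suc k) f x)" by simp
  qed
  also have "\<dots> = (\<Sum>k\<le>Suc n. real (Suc n choose k) * Dm^(Suc n-k) * (-1)^k * (P ^^ k) f x)"
    by (rule comb_step)
  finally show ?case .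
qed

end


lemma exp_sums_real: "(\<lambda>n. x ^ n / fact n) sums exp (x::real)"
  using exp_converges[of x] by (simp add: divide_inverse mult.commute)

lemma exp_summable_real: "summable (\<lambda>n. (x::real) ^ n / fact n)"
  using exp_sums_real by (rule sums_summable)

lemma exp_summable_abs: "summable (\<lambda>n. norm ((x::real) ^ n / fact n))"
proof -
  have "summable (\<lambda>n. \<bar>x\<bar> ^ n / fact n)" by (rule exp_summable_real)
  then show ?thesis by (simp add: power_abs)
qed

context wg begin

definition "E T n = (4 * Dm * T) ^ n / fact n"

lemma E_nn: "T \<ge> 0 \<Longrightarrow> E T n \<ge> 0" unfolding E_def using Dm_nn by simp

lemma E_summable: "summable (E T)" unfolding E_def by (rule exp_summable_real)

lemma E_sum: "suminf (E T) = exp (4 * Dm * T)" unfolding E_def by (rule sums_unique[symmetric, OF exp_sums_real])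

lemma sg_term:
  assumes g: "l2 g" and t: "0 \<le> t" "t \<le> T"
  shows "\<bar>(-t) ^ n / fact n * (H ^^ n) g x\<bar> \<le> E T n * sqrt (N g / m x)"
proof -
  have "\<bar>(-t) ^ n / fact n * (H ^^ n) g x\<bar> = t ^ n / fact n * \<bar>(H ^^ n) g x\<bar>"
    using t by (simp add: abs_mult power_abs)
  also have "\<dots> \<le> T ^ n / fact n * ((4 * Dm) ^ n * sqrt (N g / m x))"
    using iter_pt[OF H_l2' g, of n x] t
    by (intro mult_mono divide_right_mono power_mono) auto
  also have "\<dots> = E T n * sqrt (N g / m x)" unfolding E_def by (simp add: power_mult_distrib)
  finally show ?thesis .
qed

lemma sg_summable:
  assumes g: "l2 g" and t: "0 \<le> t" "t \<le> T"
  shows "summable (\<lambda>n. norm ((-t) ^ n / fact n * (H ^^ n) g x))"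
  by (rule summable_comparison_test'[OF summable_mult2[OF E_summable, of T "sqrt (N g / m x)"]])
     (use sg_term[OF assms] in simp)

lemma sg_tail:
  assumes g: "l2 g" and t: "0 \<le> t" "t \<le> T" and z: "\<And>j. j < n0 \<Longrightarrow> (H ^^ j) g x = 0"
  shows "\<bar>semigroup b m t g x\<bar> \<le> (\<Sum>n. E T (n + n0)) * sqrt (N g / m x)"
proof -
  let ?a = "\<lambda>n. (-t) ^ n / fact n * (H ^^ n) g x"
  have sa: "summable ?a" by (rule summable_norm_cancel[OF sg_summable[OF assms(1-3)]])
  have "semigroup b m t g x = (\<Sum>n. ?a (n + n0)) + (\<Sum>i<n0. ?a i)"
    unfolding semigroup_def by (rule suminf_split_initial_segment[OF sa])
  also have "(\<Sum>i<n0. ?a i) = 0" using z by simp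
  finally have e: "semigroup b m t g x = (\<Sum>n. ?a (n + n0))" by simp
  have sn: "summable (\<lambda>n. norm (?a (n + n0)))"
    using summable_ignore_initial_segment[OF sg_summable[OF assms(1-3)]] by simp
  have "\<bar>semigroup b m t g x\<bar> \<le> (\<Sum>n. norm (?a (n + n0)))"
    unfolding e using summable_norm[OF sn] by simp
  also have "\<dots> \<le> (\<Sum>n. E T (n + n0) * sqrt (N g / m x))"
    by (rule suminf_le[OF _ sn summable_mult2[OF summable_ignore_initial_segment[OF E_summable]]])
       (use sg_term[OF assms(1-3)] in simp)
  also have "\<dots> = (\<Sum>n. E T (n + n0)) * sqrt (N g / m x)"
    by (rule suminf_mult2[symmetric, OF summable_ignore_initial_segment[OF E_summable]])
  finally show ?thesis .
qed

lemma aux_div1: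
  fixes x F A u v w :: real
  assumes "F \<noteq> 0"
  shows "x / F * (F / A * u * v * w) = x * (u * v * w) / A"
proof -
  have "x / F * (F / A * u * v * w) = (F * inverse F) * (x * (u * v * w) / A)"
    by (simp only: divide_inverse mult_ac)
  then show ?thesis using assms by simp
qed

lemma aux_div2:
  fixes u X q F1 F2 :: real
  shows "u * X * q / (F1 * F2) = (u / F1 * q) * (X / F2)"
  by (simp only: divide_inverse mult_ac inverse_mult_distrib)

lemma term_ident:
  fixes t d q :: real
  assumes "k \<le> n"
  shows "(-t) ^ n / fact n * (real (n choose k) * d ^ (n - k) * (-1) ^ k * q)
       = (t ^ k / fact k * q) * ((- t * d) ^ (n - k) / fact (n - k))"
proof -
  have n: "n = k + (n - k)" using assms by simp
  have p: "(-t) ^ n = (-t) ^ k * (-t) ^ (n - k)" by (subst n) (simp add: power_add)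
  have q: "(-t) ^ k * (-1) ^ k = t ^ k" by (simp flip: power_mult_distrib)
  have r: "(- t * d) ^ (n - k) = (-t) ^ (n - k) * d ^ (n - k)" by (rule power_mult_distrib)
  have "(-t) ^ n / fact n * (real (n choose k) * d ^ (n - k) * (-1) ^ k * q)
      = (-t) ^ n * (d ^ (n - k) * (-1) ^ k * q) / (fact k * fact (n - k))"
    unfolding binomial_fact[OF assms] by (rule aux_div1) simp
  also have "\<dots> = ((-t) ^ k * (-1) ^ k) * ((-t) ^ (n - k) * d ^ (n - k)) * q / (fact k * fact (n - k))"
    unfolding p by (simp only: mult_ac)
  also have "\<dots> = t ^ k * (- t * d) ^ (n - k) * q / (fact k * fact (n - k))"
    by (simp only: q r)
  also have "\<dots> = (t ^ k / fact k * q) * ((- t * d) ^ (n - k) / fact (n - k))"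
    by (rule aux_div2)
  finally show ?thesis .
qed

end

context wg begin
lemma sg_lower:
  assumes f: "l2 f" "\<And>x. f x \<ge> 0" and t: "0 \<le> t"
  shows "semigroup b m t f x \<ge> exp (- t * Dm) * f x"
proof -
  let ?q = "\<lambda>k. (P ^^ k) f x"
  let ?a = "\<lambda>k. t ^ k / fact k * ?q k"
  let ?b = "\<lambda>j. (- t * Dm) ^ j / fact j"
  have qn: "?q k \<ge> 0" for k using Piter_nonneg[OF f] by simp
  have an: "?a k \<ge> 0" for k using qn t by simp
  have qb: "?q k \<le> (4 * Dm) ^ k * sqrt (N f / m x)" for k
    using iter_pt[OF P_l2 f(1), of k x] by simp
  have sa: "summable (\<lambda>k. norm (?a k))"
  proof (rule summable_comparison_test'[OF summable_mult2[OF E_summable, of t "sqrt (N f / m x)"]])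
    fix k
    have "norm (norm (?a k)) = t ^ k / fact k * ?q k" by (simp only: real_norm_def abs_abs abs_of_nonneg[OF an])
    also have "\<dots> \<le> t ^ k / fact k * ((4 * Dm) ^ k * sqrt (N f / m x))"
      using qb[of k] t by (intro mult_left_mono) auto
    also have "\<dots> = E t k * sqrt (N f / m x)" unfolding E_def by (simp add: power_mult_distrib)
    finally show "norm (norm (?a k)) \<le> E t k * sqrt (N f / m x)" .
  qed
  have sb: "summable (\<lambda>k. norm (?b k))" by (rule exp_summable_abs)
  have "semigroup b m t f x = (\<Sum>n. (-t) ^ n / fact n * (\<Sum>k\<le>n. real (n choose k) * Dm^(n-k) * (-1)^k * ?q k))"
    unfolding semigroup_def by (simp add: binom[OF f(1)])
  also have "\<dots> = (\<Sum>n. \<Sum>k\<le>n. ?a k * ?b (n - k))"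
  proof (rule suminf_cong)
    fix n
    show "(-t) ^ n / fact n * (\<Sum>k\<le>n. real (n choose k) * Dm^(n-k) * (-1)^k * ?q k) = (\<Sum>k\<le>n. ?a k * ?b (n - k))"
      unfolding sum_distrib_left
    proof (rule sum.cong[OF refl])
      fix k assume "k \<in> {..n}"
      then have kn: "k \<le> n" by simp
      show "(-t) ^ n / fact n * (real (n choose k) * Dm^(n-k) * (-1)^k * ?q k) = ?a k * ?b (n - k)"
        by (rule term_ident[OF kn])
    qed
  qed
  also have "\<dots> = suminf ?a * suminf ?b"
    by (rule Cauchy_product[OF sa sb, symmetric])
  also have "suminf ?b = exp (- t * Dm)" by (rule sums_unique[symmetric, OF exp_sums_real])
  finally have e: "semigroup b m t f x = suminf ?a * exp (- t * Dm)" .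
  have "f x = sum ?a {0}" by simp
  also have "\<dots> \<le> suminf ?a"
    by (rule sum_le_suminf[OF summable_norm_cancel[OF sa]]) (use an in auto)
  finally have "f x \<le> suminf ?a" .
  then show ?thesis unfolding e by (simp add: mult.commute)
qed

end

context wg begin
lemma L2_set_wm:
  assumes g: "l2 g" and F: "finite F"
  shows "L2_set (\<lambda>y. sqrt (m y) * g y) F \<le> sqrt (N g)"
proof -
  have "(\<Sum>y\<in>F. (sqrt (m y) * g y)\<^sup>2) = (\<Sum>y\<in>F. (g y)\<^sup>2 * m y)"
    using mpos by (simp add: power_mult_distrib less_imp_le mult.commute)
  also have "\<dots> \<le> N g" unfolding N_def
    by (rule finite_sum_le_infsum) (use g F in \<open>auto simp: in_l2_def mpos less_imp_le\<close>)
  finally show ?thesis unfolding L2_set_def by simp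
qed

lemma sg_dual:
  assumes g: "l2 g" and t: "0 \<le> t" "t \<le> T" and F: "finite F" and w: "L2_set w F \<le> 1"
  shows "(\<Sum>y\<in>F. w y * (sqrt (m y) * semigroup b m t g y)) \<le> exp (4 * Dm * T) * sqrt (N g)"
proof -
  let ?a = "\<lambda>y n. w y * (sqrt (m y) * ((-t) ^ n / fact n * (H ^^ n) g y))"
  have s: "summable (?a y)" for y
    using summable_mult[OF summable_mult[OF summable_norm_cancel[OF sg_summable[OF g t, of y]]]] by simp
  have "(\<Sum>y\<in>F. w y * (sqrt (m y) * semigroup b m t g y)) = (\<Sum>y\<in>F. \<Sum>n. ?a y n)"
  proof (rule sum.cong[OF refl])
    fix y
    have s0: "summable (\<lambda>n. (-t) ^ n / fact n * (H ^^ n) g y)"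
      by (rule summable_norm_cancel[OF sg_summable[OF g t]])
    have "w y * (sqrt (m y) * semigroup b m t g y) = w y * (\<Sum>n. sqrt (m y) * ((-t) ^ n / fact n * (H ^^ n) g y))"
      unfolding semigroup_def by (simp only: suminf_mult[OF s0])
    also have "\<dots> = (\<Sum>n. ?a y n)" by (rule suminf_mult[symmetric, OF summable_mult[OF s0]])
    finally show "w y * (sqrt (m y) * semigroup b m t g y) = (\<Sum>n. ?a y n)" .
  qed
  also have "\<dots> = (\<Sum>n. \<Sum>y\<in>F. ?a y n)" by (rule suminf_sum[symmetric]) (rule s)
  also have "\<dots> \<le> (\<Sum>n. E T n * sqrt (N g))"
  proof (rule suminf_le)
    show "summable (\<lambda>n. \<Sum>y\<in>F. ?a y n)" by (rule summable_sum) (rule s)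
    show "summable (\<lambda>n. E T n * sqrt (N g))" by (rule summable_mult2[OF E_summable])
    fix n
    let ?h = "(H ^^ n) g"
    have hl: "l2 ?h" "N ?h \<le> (16 * Dm\<^sup>2) ^ n * N g" using iter_l2[OF H_l2' g] by auto
    have "(\<Sum>y\<in>F. ?a y n) = (-t) ^ n / fact n * (\<Sum>y\<in>F. w y * (sqrt (m y) * ?h y))"
      by (simp add: sum_distrib_left algebra_simps)
    also have "\<dots> \<le> t ^ n / fact n * \<bar>\<Sum>y\<in>F. w y * (sqrt (m y) * ?h y)\<bar>"
    proof -
      have "(-t) ^ n / fact n * (\<Sum>y\<in>F. w y * (sqrt (m y) * ?h y))
          \<le> \<bar>(-t) ^ n / fact n * (\<Sum>y\<in>F. w y * (sqrt (m y) * ?h y))\<bar>" by (rule abs_ge_self)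
      also have "\<dots> = t ^ n / fact n * \<bar>\<Sum>y\<in>F. w y * (sqrt (m y) * ?h y)\<bar>"
        using t by (simp add: abs_mult power_abs)
      finally show ?thesis .
    qed
    also have "\<dots> \<le> T ^ n / fact n * ((4 * Dm) ^ n * sqrt (N g))"
    proof (rule mult_mono)
      show "t ^ n / fact n \<le> T ^ n / fact n" using t by (intro divide_right_mono power_mono) auto
      have "\<bar>\<Sum>y\<in>F. w y * (sqrt (m y) * ?h y)\<bar> \<le> (\<Sum>y\<in>F. \<bar>w y\<bar> * \<bar>sqrt (m y) * ?h y\<bar>)"
        by (rule order_trans[OF sum_abs]) (simp add: abs_mult)
      also have "\<dots> \<le> L2_set w F * L2_set (\<lambda>y. sqrt (m y) * ?h y) F" by (rule L2_set_mult_ineq)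
      also have "\<dots> \<le> 1 * sqrt (N ?h)"
        by (rule mult_mono[OF w L2_set_wm[OF hl(1) F]]) (auto simp: L2_set_def intro!: sum_nonneg)
      also have "\<dots> \<le> sqrt ((16 * Dm\<^sup>2) ^ n * N g)" using hl(2) by simp
      also have "\<dots> = (4 * Dm) ^ n * sqrt (N g)"
      proof -
        have "(16 * Dm\<^sup>2) ^ n = ((4 * Dm)\<^sup>2) ^ n" by (simp add: power_mult_distrib)
        also have "\<dots> = ((4 * Dm) ^ n)\<^sup>2" by (metis power_mult mult.commute)
        finally show ?thesis using Dm_nn by (simp add: real_sqrt_mult)
      qed
      finally show "\<bar>\<Sum>y\<in>F. w y * (sqrt (m y) * ?h y)\<bar> \<le> (4 * Dm) ^ n * sqrt (N g)" .
    qed (use t in auto)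
    also have "\<dots> = E T n * sqrt (N g)" unfolding E_def by (simp add: power_mult_distrib)
    finally show "(\<Sum>y\<in>F. ?a y n) \<le> E T n * sqrt (N g)" .
  qed
  also have "\<dots> = exp (4 * Dm * T) * sqrt (N g)"
    using suminf_mult2[OF E_summable, of T "sqrt (N g)"] E_sum[of T] by simp
  finally show ?thesis .
qed

end


lemma L2_sq: "(L2_set v F)\<^sup>2 = (\<Sum>y\<in>F. (v y)\<^sup>2)"
  unfolding L2_set_def by (simp add: sum_nonneg)

lemma L2_dual:
  fixes v :: "'b \<Rightarrow> real"
  assumes F: "finite F" and C: "0 \<le> C" and h: "\<And>w. L2_set w F \<le> 1 \<Longrightarrow> (\<Sum>y\<in>F. w y * v y) \<le> C"
  shows "L2_set v F \<le> C"
proof (cases "L2_set v F = 0")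
  case True then show ?thesis using C by simp
next
  case False
  define L where "L = L2_set v F"
  have L: "L > 0" using False L2_set_nonneg[of v F] unfolding L_def by linarith
  have "L2_set (\<lambda>y. (1 / L) * v y) F = (1 / L) * L2_set v F"
    by (rule L2_set_right_distrib[symmetric]) (use L in simp)
  also have "\<dots> = 1" using L unfolding L_def by simp
  finally have w1: "L2_set (\<lambda>y. (1 / L) * v y) F \<le> 1" by simp
  have "(\<Sum>y\<in>F. (1 / L) * v y * v y) = (1 / L) * (\<Sum>y\<in>F. (v y)\<^sup>2)"
    by (simp add: sum_distrib_left power2_eq_square mult.assoc)
  also have "\<dots> = (1 / L) * L\<^sup>2" unfolding L_def L2_sq ..
  also have "\<dots> = L" using L by (simp add: power2_eq_square)
  finally have "L = (\<Sum>y\<in>F. (1 / L) * v y * v y)" by simp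
  then show ?thesis using h[OF w1] unfolding L_def by simp
qed

lemma L2_set_subset:
  assumes "finite F" "G \<subseteq> F" shows "L2_set w G \<le> L2_set w F"
  unfolding L2_set_def using assms by (intro real_sqrt_le_mono sum_mono2) auto

lemma nu_int:
  fixes \<nu> :: "real \<Rightarrow> real" and T r :: real
  assumes T: "T > 0" and r: "r \<ge> 1" and nn: "\<And>\<tau>. \<nu> \<tau> \<ge> 0"
    and si: "set_integrable lborel {0<..<T} (\<lambda>\<tau>. \<nu> \<tau> powr r)"
  shows "set_integrable lborel {0<..<T} \<nu> \<and>
     (LINT \<tau>:{0<..<T}|lborel. \<nu> \<tau>) \<le> T + (LINT \<tau>:{0<..<T}|lborel. \<nu> \<tau> powr r)"
proof -
  let ?S = "{0<..<T} :: real set"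
  have i1: "integrable lborel (\<lambda>\<tau>. indicator ?S \<tau> * \<nu> \<tau> powr r)"
    using si unfolding set_integrable_def by simp
  have i0: "integrable lborel (\<lambda>\<tau>. indicator ?S \<tau> :: real)"
    using T by (intro integrable_real_indicator) auto
  have eq: "(\<lambda>\<tau>. indicator ?S \<tau> * \<nu> \<tau>) = (\<lambda>\<tau>. (indicator ?S \<tau> * \<nu> \<tau> powr r) powr (1 / r))"
  proof
    fix \<tau>
    show "indicator ?S \<tau> * \<nu> \<tau> = (indicator ?S \<tau> * \<nu> \<tau> powr r) powr (1 / r)"
    proof (cases "\<tau> \<in> ?S")
      case True
      have "(\<nu> \<tau> powr r) powr (1 / r) = \<nu> \<tau> powr (r * (1 / r))" by (rule powr_powr)
      also have "\<dots> = \<nu> \<tau>" using r nn[of \<tau>] by (simp add: powr_one)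
      finally show ?thesis using True by simp
    next
      case False then show ?thesis by simp
    qed
  qed
  have meas: "(\<lambda>\<tau>. indicator ?S \<tau> * \<nu> \<tau>) \<in> borel_measurable lborel"
    unfolding eq using borel_measurable_integrable[OF i1] by measurable
  have bnd: "\<nu> \<tau> \<le> 1 + \<nu> \<tau> powr r" for \<tau>
  proof (cases "\<nu> \<tau> \<le> 1")
    case True then show ?thesis by (smt (verit) powr_ge_zero)
  next
    case False
    then have "\<nu> \<tau> powr 1 \<le> \<nu> \<tau> powr r" using r by (intro powr_mono) auto
    then show ?thesis using nn[of \<tau>] by (simp add: powr_one)
  qed
  have i2: "integrable lborel (\<lambda>\<tau>. indicator ?S \<tau> + indicator ?S \<tau> * \<nu> \<tau> powr r)"
    using i0 i1 by (rule Bochner_Integration.integrable_add)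
  have pt: "indicator ?S \<tau> * \<nu> \<tau> \<le> indicator ?S \<tau> + indicator ?S \<tau> * \<nu> \<tau> powr r" for \<tau>
    using bnd[of \<tau>] by (cases "\<tau> \<in> ?S") auto
  have i3: "integrable lborel (\<lambda>\<tau>. indicator ?S \<tau> * \<nu> \<tau>)"
  proof (rule Bochner_Integration.integrable_bound[OF i2 meas])
    show "AE \<tau> in lborel. norm (indicator ?S \<tau> * \<nu> \<tau>) \<le> norm (indicator ?S \<tau> + indicator ?S \<tau> * \<nu> \<tau> powr r)"
      using pt nn by (intro AE_I2) (simp add: abs_of_nonneg indicator_def)
  qed
  have "integral\<^sup>L lborel (\<lambda>\<tau>. indicator ?S \<tau> * \<nu> \<tau>)
      \<le> integral\<^sup>L lborel (\<lambda>\<tau>. indicator ?S \<tau> + indicator ?S \<tau> * \<nu> \<tau> powr r)"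
    by (rule integral_mono[OF i3 i2 pt])
  also have "\<dots> = integral\<^sup>L lborel (\<lambda>\<tau>. indicator ?S \<tau> :: real) + integral\<^sup>L lborel (\<lambda>\<tau>. indicator ?S \<tau> * \<nu> \<tau> powr r)"
    by (rule Bochner_Integration.integral_add[OF i0 i1])
  also have "integral\<^sup>L lborel (\<lambda>\<tau>. indicator ?S \<tau> :: real) = T" using T by simp
  finally show ?thesis using i3 unfolding set_integrable_def set_lebesgue_integral_def by simp
qed

lemma path_ext:
  assumes "graph_path b x y k" "b y z > 0" shows "graph_path b x z (Suc k)"
proof -
  obtain p where p: "p 0 = x" "p k = y" "\<forall>i<k. b (p i) (p (Suc i)) > 0"
    using assms(1) unfolding graph_path_def by blast
  define q where "q = p(Suc k := z)"
  have "q 0 = x" "q (Suc k) = z" using p unfolding q_def by auto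
  moreover have "\<forall>i<Suc k. b (q i) (q (Suc i)) > 0"
  proof (intro allI impI)
    fix i assume i: "i < Suc k"
    show "b (q i) (q (Suc i)) > 0"
    proof (cases "i = k")
      case True then show ?thesis using p assms(2) unfolding q_def by simp
    next
      case False then show ?thesis using p i unfolding q_def by simp
    qed
  qed
  ultimately show ?thesis unfolding graph_path_def by blast
qed

lemma path_rev:
  assumes sym: "\<And>x y. b x y = b y x" and "graph_path b x y k" shows "graph_path b y x k"
proof -
  obtain p where p: "p 0 = x" "p k = y" "\<forall>i<k. b (p i) (p (Suc i)) > 0"
    using assms(2) unfolding graph_path_def by blast
  define q where "q i = p (k - i)" for i
  have "q 0 = y" "q k = x" using p unfolding q_def by auto
  moreover have "\<forall>i<k. b (q i) (q (Suc i)) > 0"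
  proof (intro allI impI)
    fix i assume i: "i < k"
    have "k - i = Suc (k - Suc i)" using i by simp
    then have "b (q i) (q (Suc i)) = b (p (Suc (k - Suc i))) (p (k - Suc i))" unfolding q_def by simp
    also have "\<dots> = b (p (k - Suc i)) (p (Suc (k - Suc i)))" by (rule sym)
    finally show "b (q i) (q (Suc i)) > 0" using p(3) i by simp
  qed
  ultimately show ?thesis unfolding graph_path_def by blast
qed

context wg begin

lemma locality:
  assumes "\<And>y k. k \<le> n \<Longrightarrow> graph_path b x y k \<Longrightarrow> g y = 0"
  shows "(H ^^ n) g x = 0"
  using assms
proof (induction n arbitrary: g)
  case 0
  have "graph_path b x x 0" unfolding graph_path_def by auto
  then show ?case using 0 by simp
next
  case (Suc n)
  have "(H ^^ Suc n) g = (H ^^ n) (H g)" by (simp only: funpow_Suc_right comp_def)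
  moreover have "(H ^^ n) (H g) x = 0"
  proof (rule Suc.IH)
    fix y k assume k: "k \<le> n" and p: "graph_path b x y k"
    have gy: "g y = 0" using Suc.prems[of k y] k p by simp
    have z0: "b y z * (g y - g z) = 0" for z
    proof (cases "b y z > 0")
      case True
      then have "graph_path b x z (Suc k)" by (rule path_ext[OF p])
      then have "g z = 0" using Suc.prems[of "Suc k" z] k by simp
      then show ?thesis using gy by simp
    next
      case False then have "b y z = 0" using bnn[of y z] by simp
      then show ?thesis by simp
    qed
    show "H g y = 0" unfolding laplacian_def z0 by simp
  qed
  ultimately show ?case by simp
qed

lemma tail_small:
  assumes "e > 0" shows "\<exists>n0. (\<Sum>n. E T (n + n0)) < e"
proof -
  have "(\<lambda>n. \<Sum>i<n. E T i) \<longlonglongrightarrow> suminf (E T)" by (rule summable_LIMSEQ[OF E_summable])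
  then have "eventually (\<lambda>n. suminf (E T) - e < (\<Sum>i<n. E T i)) sequentially"
    using assms by (intro order_tendstoD(1)) auto
  then obtain n0 where "suminf (E T) - e < (\<Sum>i<n0. E T i)"
    unfolding eventually_sequentially by auto
  moreover have "(\<Sum>n. E T (n + n0)) = suminf (E T) - (\<Sum>i<n0. E T i)"
    by (rule suminf_minus_initial_segment[OF E_summable])
  ultimately have "(\<Sum>n. E T (n + n0)) < e" by linarith
  then show ?thesis by blast
qed

end


context wg begin

lemma main_contra:
  fixes D :: "'a set" and T r K \<alpha> :: real
  assumes T: "T > 0" and r: "r \<ge> 1" and K: "K \<ge> 0" and al: "\<alpha> < exp (- Dm * T)"
    and ctrl: "controllable b m D \<alpha> T r K"
  shows "comb_rel_dense b D"
proof (rule ccontr)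
  assume nd: "\<not> comb_rel_dense b D"
  let ?S = "{0<..<T} :: real set"
  define M0 where "M0 = T + K powr r"
  have M0: "M0 \<ge> 0" using T unfolding M0_def by simp
  define eps where "eps = exp (- Dm * T) - \<alpha>"
  have eps: "eps > 0" using al unfolding eps_def by simp
  obtain n0 where n0: "(\<Sum>n. E T (n + n0)) < eps / (M0 + 1)"
    using tail_small[of "eps / (M0 + 1)" T] eps M0 by auto
  define tl where "tl = (\<Sum>n. E T (n + n0))"
  have tl_nn: "tl \<ge> 0" unfolding tl_def
    by (rule suminf_nonneg[OF summable_ignore_initial_segment[OF E_summable]]) (use T E_nn in simp)
  have tlM: "tl * M0 < eps"
  proof -
    have "tl * M0 \<le> tl * (M0 + 1)" using tl_nn by (simp add: mult_left_mono)
    also have "\<dots> < eps" using n0 M0 unfolding tl_def by (simp add: pos_less_divide_eq)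
    finally show ?thesis .
  qed
  obtain x where far: "\<And>y. y \<in> D \<Longrightarrow> real (d_comb b y x) > real n0"
  proof -
    have "(\<Union>y\<in>D. {z. real (d_comb b y z) \<le> real n0 + 1}) \<noteq> UNIV"
      using nd unfolding comb_rel_dense_def by (metis add_nonneg_pos of_nat_0_le_iff zero_less_one)
    then obtain x where "x \<notin> (\<Union>y\<in>D. {z. real (d_comb b y z) \<le> real n0 + 1})" by blast
    then have "\<And>y. y \<in> D \<Longrightarrow> real (d_comb b y x) > real n0" by fastforce
    then show ?thesis using that by blast
  qed
  have mx: "m x > 0" by (rule mpos)
  define c where "c = 1 / sqrt (m x)"
  have c: "c > 0" using mx unfolding c_def by simp
  define f0 where "f0 = (\<lambda>y. if y = x then c else 0)"
  have f0sq: "(\<lambda>y. (f0 y)\<^sup>2 * m y) = (\<lambda>y. if y = x then 1 else 0)"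
    using mx unfolding f0_def c_def by (auto simp: power_divide)
  have f0l2: "l2 f0" unfolding in_l2_def f0sq
    by (subst summable_on_cong_neutral[where T = "{x}"]) auto
  have Nf0: "N f0 = 1" unfolding N_def f0sq
    by (subst infsum_cong_neutral[where T = "{x}" and g = "\<lambda>_. 1"]) auto
  have f0nn: "\<And>y. f0 y \<ge> 0" using c unfolding f0_def by simp
  have nf0: "l2_norm m UNIV f0 = 1" using Nf0 unfolding l2_norm_def N_def by simp
  obtain u where Lr: "Lr_control m D T r u (K * l2_norm m UNIV f0)"
    and solb: "l2_norm m UNIV (mild_solution b m D f0 u T) \<le> \<alpha> * l2_norm m UNIV f0"
    using ctrl f0l2 unfolding controllable_def by blast
  define \<nu> where "\<nu> \<tau> = l2_norm m D (u \<tau>)" for \<tau>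
  have nu_nn: "\<nu> \<tau> \<ge> 0" for \<tau> unfolding \<nu>_def l2_norm_def
    by (rule real_sqrt_ge_zero, rule infsum_nonneg) (simp add: mpos less_imp_le)
  have inl2: "\<And>\<tau>. \<tau> \<in> ?S \<Longrightarrow> in_l2 m D (u \<tau>)"
    and si: "set_integrable lborel ?S (\<lambda>\<tau>. \<nu> \<tau> powr r)"
    and kb: "(LINT \<tau>:?S|lborel. \<nu> \<tau> powr r) powr (1 / r) \<le> K"
    using Lr nf0 unfolding Lr_control_def \<nu>_def by auto
  have nuI: "set_integrable lborel ?S \<nu>"
    and nuI2: "(LINT \<tau>:?S|lborel. \<nu> \<tau>) \<le> T + (LINT \<tau>:?S|lborel. \<nu> \<tau> powr r)"
    using nu_int[OF T r nu_nn si] by auto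
  have intM0: "(LINT \<tau>:?S|lborel. \<nu> \<tau>) \<le> M0"
  proof -
    define X where "X = (LINT \<tau>:?S|lborel. \<nu> \<tau> powr r)"
    have X0: "X \<ge> 0" unfolding X_def set_lebesgue_integral_def
      by (rule Bochner_Integration.integral_nonneg) (simp add: indicator_def)
    have "X = (X powr (1 / r)) powr r" using X0 r by (simp add: powr_powr powr_one)
    also have "\<dots> \<le> K powr r" using kb r unfolding X_def[symmetric] by (intro powr_mono2) auto
    finally show ?thesis using nuI2 unfolding M0_def X_def by simp
  qed
  define g where "g \<tau> = ext_zero D (u \<tau>)" for \<tau>
  have gsq: "(\<lambda>y. (g \<tau> y)\<^sup>2 * m y) = (\<lambda>y. if y \<in> D then (u \<tau> y)\<^sup>2 * m y else 0)" for \<tau>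
    unfolding g_def ext_zero_def by auto
  have gl2: "l2 (g \<tau>)" and gN: "sqrt (N (g \<tau>)) = \<nu> \<tau>" if "\<tau> \<in> ?S" for \<tau>
  proof -
    have s: "(\<lambda>y. (u \<tau> y)\<^sup>2 * m y) summable_on D" using inl2[OF that] unfolding in_l2_def .
    show "l2 (g \<tau>)" unfolding in_l2_def gsq
      by (subst summable_on_cong_neutral[where T = D and g = "\<lambda>y. (u \<tau> y)\<^sup>2 * m y"]) (use s in auto)
    show "sqrt (N (g \<tau>)) = \<nu> \<tau>" unfolding N_def gsq \<nu>_def l2_norm_def
      by (subst infsum_cong_neutral[where T = D and g = "\<lambda>y. (u \<tau> y)\<^sup>2 * m y"]) auto
  qed
  have zero: "(H ^^ j) (g \<tau>) x = 0" if "j < n0" for j \<tau>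
  proof (rule locality)
    fix y k assume k: "k \<le> j" and p: "graph_path b x y k"
    show "g \<tau> y = 0"
    proof (cases "y \<in> D")
      case True
      have "graph_path b y x k" by (rule path_rev[OF bsym p])
      then have "d_comb b y x \<le> k" unfolding d_comb_def by (rule Least_le)
      then have "real (d_comb b y x) \<le> real n0" using k that by simp
      then show ?thesis using far[OF True] by simp
    next
      case False then show ?thesis unfolding g_def ext_zero_def by simp
    qed
  qed
  define h where "h \<tau> y = semigroup b m (T - \<tau>) (g \<tau>) y" for \<tau> y
  have hA: "\<bar>h \<tau> x\<bar> \<le> tl / sqrt (m x) * \<nu> \<tau>" if "\<tau> \<in> ?S" for \<tau>
  proof -
    have "\<bar>h \<tau> x\<bar> \<le> tl * sqrt (N (g \<tau>) / m x)" unfolding h_def tl_def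
      by (rule sg_tail[OF gl2[OF that]]) (use that zero in auto)
    also have "\<dots> = tl / sqrt (m x) * \<nu> \<tau>" using gN[OF that] by (simp add: real_sqrt_divide)
    finally show ?thesis .
  qed
  have hB: "(\<Sum>y\<in>G. w y * (sqrt (m y) * h \<tau> y)) \<le> exp (4 * Dm * T) * \<nu> \<tau>"
    if "\<tau> \<in> ?S" "finite G" "L2_set w G \<le> 1" for \<tau> G w
    using sg_dual[OF gl2[OF that(1)] _ _ that(2,3), of "T - \<tau>" T] that(1) gN[OF that(1)]
    unfolding h_def by simp
  define I where "I y = (LINT \<tau>:?S|lborel. h \<tau> y)" for y
  have sol: "mild_solution b m D f0 u T = (\<lambda>y. semigroup b m T f0 y + I y)"
    unfolding mild_solution_def I_def h_def g_def by simp
  have nuI': "integrable lborel (\<lambda>\<tau>. indicator ?S \<tau> * \<nu> \<tau>)"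
    using nuI unfolding set_integrable_def by simp
  have intM0': "integral\<^sup>L lborel (\<lambda>\<tau>. indicator ?S \<tau> * \<nu> \<tau>) \<le> M0"
    using intM0 unfolding set_lebesgue_integral_def by simp
  have IA: "\<bar>I x\<bar> \<le> tl / sqrt (m x) * M0"
  proof (cases "integrable lborel (\<lambda>\<tau>. indicator ?S \<tau> * h \<tau> x)")
    case True
    have "\<bar>I x\<bar> = \<bar>integral\<^sup>L lborel (\<lambda>\<tau>. indicator ?S \<tau> * h \<tau> x)\<bar>"
      unfolding I_def set_lebesgue_integral_def by simp
    also have "\<dots> \<le> integral\<^sup>L lborel (\<lambda>\<tau>. tl / sqrt (m x) * (indicator ?S \<tau> * \<nu> \<tau>))"
    proof (rule integral_abs_bound_integral[OF True])
      show "integrable lborel (\<lambda>\<tau>. tl / sqrt (m x) * (indicator ?S \<tau> * \<nu> \<tau>))"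
        using nuI' by simp
      fix \<tau> :: real
      show "\<bar>indicator ?S \<tau> * h \<tau> x\<bar> \<le> tl / sqrt (m x) * (indicator ?S \<tau> * \<nu> \<tau>)"
        using hA[of \<tau>] by (cases "\<tau> \<in> ?S") auto
    qed
    also have "\<dots> = tl / sqrt (m x) * integral\<^sup>L lborel (\<lambda>\<tau>. indicator ?S \<tau> * \<nu> \<tau>)" by simp
    also have "\<dots> \<le> tl / sqrt (m x) * M0"
      using intM0' tl_nn mx by (intro mult_left_mono) auto
    finally show ?thesis .
  next
    case False
    then have "I x = 0" unfolding I_def set_lebesgue_integral_def
      by (simp add: not_integrable_integral_eq)
    then show ?thesis using tl_nn mx M0 by simp
  qed
  have IB: "L2_set (\<lambda>y. sqrt (m y) * I y) F \<le> exp (4 * Dm * T) * M0" if F: "finite F" for F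
  proof (rule L2_dual[OF F])
    show "0 \<le> exp (4 * Dm * T) * M0" using M0 by simp
    fix w assume w: "L2_set w F \<le> 1"
    define G where "G = {y \<in> F. integrable lborel (\<lambda>\<tau>. indicator ?S \<tau> * h \<tau> y)}"
    have G: "finite G" "G \<subseteq> F" using F unfolding G_def by auto
    have wG: "L2_set w G \<le> 1" using L2_set_subset[OF F G(2), of w] w by simp
    have Iy: "I y = integral\<^sup>L lborel (\<lambda>\<tau>. indicator ?S \<tau> * h \<tau> y)" for y
      unfolding I_def set_lebesgue_integral_def by simp
    have "(\<Sum>y\<in>F. w y * (sqrt (m y) * I y)) = (\<Sum>y\<in>G. w y * (sqrt (m y) * I y))"
    proof (rule sum.mono_neutral_right[OF F G(2)])
      show "\<forall>i\<in>F - G. w i * (sqrt (m i) * I i) = 0"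
        unfolding G_def Iy by (auto simp: not_integrable_integral_eq)
    qed
    also have "\<dots> = (\<Sum>y\<in>G. integral\<^sup>L lborel (\<lambda>\<tau>. w y * sqrt (m y) * (indicator ?S \<tau> * h \<tau> y)))"
      unfolding Iy by (simp add: mult.assoc)
    also have "\<dots> = integral\<^sup>L lborel (\<lambda>\<tau>. \<Sum>y\<in>G. w y * sqrt (m y) * (indicator ?S \<tau> * h \<tau> y))"
      by (rule Bochner_Integration.integral_sum[symmetric]) (use G_def in auto)
    also have "\<dots> \<le> integral\<^sup>L lborel (\<lambda>\<tau>. exp (4 * Dm * T) * (indicator ?S \<tau> * \<nu> \<tau>))"
    proof (rule integral_mono)
      show "integrable lborel (\<lambda>\<tau>. \<Sum>y\<in>G. w y * sqrt (m y) * (indicator ?S \<tau> * h \<tau> y))"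
        by (rule Bochner_Integration.integrable_sum) (use G_def in auto)
      show "integrable lborel (\<lambda>\<tau>. exp (4 * Dm * T) * (indicator ?S \<tau> * \<nu> \<tau>))"
        using nuI' by simp
      fix \<tau> :: real
      show "(\<Sum>y\<in>G. w y * sqrt (m y) * (indicator ?S \<tau> * h \<tau> y)) \<le> exp (4 * Dm * T) * (indicator ?S \<tau> * \<nu> \<tau>)"
      proof (cases "\<tau> \<in> ?S")
        case True
        have "(\<Sum>y\<in>G. w y * sqrt (m y) * (indicator ?S \<tau> * h \<tau> y)) = (\<Sum>y\<in>G. w y * (sqrt (m y) * h \<tau> y))"
          using True by (simp add: mult.assoc)
        also have "\<dots> \<le> exp (4 * Dm * T) * \<nu> \<tau>" by (rule hB[OF True G(1) wG])
        finally show ?thesis using True by simp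
      next
        case False then show ?thesis by simp
      qed
    qed
    also have "\<dots> = exp (4 * Dm * T) * integral\<^sup>L lborel (\<lambda>\<tau>. indicator ?S \<tau> * \<nu> \<tau>)" by simp
    also have "\<dots> \<le> exp (4 * Dm * T) * M0" using intM0' by simp
    finally show "(\<Sum>y\<in>F. w y * (sqrt (m y) * I y)) \<le> exp (4 * Dm * T) * M0" .
  qed
  have SB: "L2_set (\<lambda>y. sqrt (m y) * semigroup b m T f0 y) F \<le> exp (4 * Dm * T)" if F: "finite F" for F
  proof (rule L2_dual[OF F])
    show "0 \<le> exp (4 * Dm * T)" by simp
    fix w assume w: "L2_set w F \<le> 1"
    show "(\<Sum>y\<in>F. w y * (sqrt (m y) * semigroup b m T f0 y)) \<le> exp (4 * Dm * T)"
      using sg_dual[OF f0l2 _ _ F w, of T T] T Nf0 by simp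
  qed
  define s where "s = mild_solution b m D f0 u T"
  have s_eq: "s y = semigroup b m T f0 y + I y" for y unfolding s_def sol by simp
  have sl2: "l2 s"
  proof -
    have "(\<lambda>y. (s y)\<^sup>2 * m y) summable_on UNIV \<and> infsum (\<lambda>y. (s y)\<^sup>2 * m y) UNIV \<le> (exp (4 * Dm * T) + exp (4 * Dm * T) * M0)\<^sup>2"
    proof (rule bounded_finite_sums)
      fix y show "0 \<le> (s y)\<^sup>2 * m y" using mpos[of y] by simp
    next
      fix F :: "'a set" assume F: "finite F"
      have "(\<Sum>y\<in>F. (s y)\<^sup>2 * m y) = (L2_set (\<lambda>y. sqrt (m y) * s y) F)\<^sup>2"
        unfolding L2_sq using mpos by (simp add: power_mult_distrib less_imp_le mult.commute)
      also have "\<dots> \<le> (exp (4 * Dm * T) + exp (4 * Dm * T) * M0)\<^sup>2"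
      proof (rule power_mono)
        have "L2_set (\<lambda>y. sqrt (m y) * s y) F
            = L2_set (\<lambda>y. sqrt (m y) * semigroup b m T f0 y + sqrt (m y) * I y) F"
          unfolding s_eq by (simp add: distrib_left)
        also have "\<dots> \<le> L2_set (\<lambda>y. sqrt (m y) * semigroup b m T f0 y) F + L2_set (\<lambda>y. sqrt (m y) * I y) F"
          by (rule L2_set_triangle_ineq)
        also have "\<dots> \<le> exp (4 * Dm * T) + exp (4 * Dm * T) * M0"
          using SB[OF F] IB[OF F] by simp
        finally show "L2_set (\<lambda>y. sqrt (m y) * s y) F \<le> exp (4 * Dm * T) + exp (4 * Dm * T) * M0" .
      qed simp
      finally show "(\<Sum>y\<in>F. (s y)\<^sup>2 * m y) \<le> (exp (4 * Dm * T) + exp (4 * Dm * T) * M0)\<^sup>2" .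
    qed
    then show ?thesis unfolding in_l2_def by simp
  qed
  have low: "\<bar>s x\<bar> * sqrt (m x) \<le> l2_norm m UNIV s"
  proof -
    have "(s x)\<^sup>2 * m x \<le> N s" by (rule pt_le_N[OF sl2])
    then have "sqrt ((s x)\<^sup>2 * m x) \<le> sqrt (N s)" by simp
    then show ?thesis unfolding l2_norm_def N_def using mx by (simp add: real_sqrt_mult)
  qed
  have Sx: "semigroup b m T f0 x \<ge> exp (- T * Dm) * c"
  proof -
    have f0x: "f0 x = c" unfolding f0_def by simp
    show ?thesis using sg_lower[OF f0l2 f0nn, of T x] T unfolding f0x by simp
  qed
  have "s x \<ge> exp (- T * Dm) * c - tl / sqrt (m x) * M0"
    using Sx IA unfolding s_eq by linarith
  then have "s x * sqrt (m x) \<ge> (exp (- T * Dm) * c - tl / sqrt (m x) * M0) * sqrt (m x)"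
    using mx by (simp add: mult_right_mono)
  also have "(exp (- T * Dm) * c - tl / sqrt (m x) * M0) * sqrt (m x) = exp (- Dm * T) - tl * M0"
  proof -
    have cs: "c * sqrt (m x) = 1" using mx unfolding c_def by simp
    have e1: "exp (- T * Dm) * c * sqrt (m x) = exp (- Dm * T)"
      using cs by (simp add: mult.assoc mult.commute)
    have e2: "tl / sqrt (m x) * M0 * sqrt (m x) = tl * M0" using mx by simp
    show ?thesis unfolding left_diff_distrib e1 e2 ..
  qed
  finally have "s x * sqrt (m x) \<ge> exp (- Dm * T) - tl * M0" .
  then have "l2_norm m UNIV s \<ge> exp (- Dm * T) - tl * M0"
  proof -
    have "s x * sqrt (m x) \<le> \<bar>s x\<bar> * sqrt (m x)" by (rule mult_right_mono) (use mx in auto)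
    then show ?thesis using low \<open>s x * sqrt (m x) \<ge> exp (- Dm * T) - tl * M0\<close> by linarith
  qed
  moreover have "l2_norm m UNIV s \<le> \<alpha>" using solb nf0 unfolding s_def by simp
  ultimately show False using tlM unfolding eps_def by simp
qed

end

theorem mainTheorem5:
  fixes b :: "'a::countable \<Rightarrow> 'a \<Rightarrow> real" and m :: "'a \<Rightarrow> real"
    and D :: "'a set" and T r K \<alpha> :: real
  assumes "weighted_graph b m"
    and "graph_connected b"
    and "bounded_degree b m"
    and "bounded_measure m"
    and "T > 0" and "r \<ge> 1" and "K \<ge> 0"
    and "0 \<le> \<alpha>" and "\<alpha> < exp (- D_max b m * T)"
    and "controllable b m D \<alpha> T r K"
  shows "comb_rel_dense b D"
proof -
  interpret wg b m using assms(1,3) by unfold_locales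
  show ?thesis by (rule main_contra[OF assms(5,6,7,9,10)])
qed

end
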